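(* Let $\Phi=(A;A^*;\{E_i\}_{i=0}^d;\{E^*_i\}_{i=0}^d)$ be a Leonard system in $\mathcal A$ with eigenvalue sequence $\theta_0,\dots,\theta_d$, and let $c_i$, $\nu$ be as defined below. Then $$(\theta_0-\theta_1)(\theta_0-\theta_2)\cdots(\theta_0-\theta_d)=\nu\,c_1c_2\cdots c_d .$$
   Context: Let $\mathbb K$ be a field, $d\ge 0$ an integer, and $\mathcal A$ a $\mathbb K$-algebra isomorphic to the full matrix algebra $\mathrm{Mat}_{d+1}(\mathbb K)$; $I$ is its identity. An element of $\mathcal A$ is multiplicity-free if it has $d+1$ mutually distinct eigenvalues in $\mathbb K$. If $A$ is multiplicity-free with eigenvalues $\theta_0,\dots,\theta_d$, the primitive idempotent of $A$ associated with $\theta_i$ is $E_i=\prod_{j\ne i}(A-\theta_jI)/(\theta_i-\theta_j)$. A Leonard system in $\mathcal A$ is a sequence $\Phi=(A;A^*;\{E_i\}_{i=0}^d;\{E^*_i\}_{i=0}^d)$ such that (i) $A,A^*\in\mathcal A$ are multiplicity-free; (ii) $E_0,\dots,E_d$ is an ordering of the primitive idempotents of $A$; (iii) $E^*_0,\dots,E^*_d$ is an ordering of the primitive idempotents of $A^*$; (iv) $E_iA^*E_j=0$ if $|i-j|>1$ and $E_iA^*E_j\ne0$ if $|i-j|=1$ ($0\le i,j\le d$); (v) $E^*_iAE^*_j=0$ if $|i-j|>1$ and $E^*_iAE^*_j\ne0$ if $|i-j|=1$ ($0\le i,j\le d$). Here $A^*$ is merely notation (not an adjoint). Write $\theta_i$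 for the eigenvalue of $A$ associated with $E_i$. The scalar $\mathrm{tr}(E_0E^*_0)$ is nonzero; $\nu$ denotes its multiplicative inverse. Standard basis: for an irreducible (left) $\mathcal A$-module $V$ and a nonzero $u\in E_0V$, the vectors $E^*_0u,\dots,E^*_du$ form a basis of $V$; the matrix of $A$ in this basis is tridiagonal and independent of the choice of $u$; $c_i$ ($1\le i\le d$) is its $(i,i-1)$ entry. *)

theory Defs
  imports "Jordan_Normal_Form.Matrix" "Jordan_Normal_Form.Char_Poly"
begin

text \<open>The algebra \<A> is taken to be Mat_{d+1}(K) itself (square matrices of size d+1
  over a field K), with identity 1_m (d+1).\<close>

definition mtrace :: "'a::comm_ring_1 mat \<Rightarrow> 'a" where
  "mtrace M = (\<Sum>i<dim_row M. M $$ (i, i))"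

definition mat_prod_list :: "nat \<Rightarrow> 'a::semiring_1 mat list \<Rightarrow> 'a mat" where
  "mat_prod_list n Ms = foldr (\<lambda>M acc. M * acc) Ms (1\<^sub>m n)"

definition mult_free :: "nat \<Rightarrow> 'a::field mat \<Rightarrow> bool" where
  "mult_free d A \<longleftrightarrow> A \<in> carrier_mat (d+1) (d+1) \<and>
     (\<exists>\<theta>::nat \<Rightarrow> 'a. inj_on \<theta> {..d} \<and> (\<forall>i\<le>d. eigenvalue A (\<theta> i)))"

definition prim_idem :: "nat \<Rightarrow> 'a::field mat \<Rightarrow> (nat \<Rightarrow> 'a) \<Rightarrow> nat \<Rightarrow> 'a mat" where
  "prim_idem d A \<theta> i = mat_prod_list (d+1)
     (map (\<lambda>j. (1 / (\<theta> i - \<theta> j)) \<cdot>\<^sub>m (A - \<theta> j \<cdot>\<^sub>m 1\<^sub>m (d+1)))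
          (filter (\<lambda>j. j \<noteq> i) [0..<d+1]))"

definition idem_ordering :: "nat \<Rightarrow> 'a::field mat \<Rightarrow> (nat \<Rightarrow> 'a mat) \<Rightarrow> (nat \<Rightarrow> 'a) \<Rightarrow> bool" where
  "idem_ordering d A E \<theta> \<longleftrightarrow> inj_on \<theta> {..d} \<and> (\<forall>i\<le>d. eigenvalue A (\<theta> i)) \<and>
     (\<forall>i\<le>d. E i = prim_idem d A \<theta> i)"

definition leonard_system ::
  "nat \<Rightarrow> 'a::field mat \<Rightarrow> 'a mat \<Rightarrow> (nat \<Rightarrow> 'a mat) \<Rightarrow> (nat \<Rightarrow> 'a mat) \<Rightarrow> bool" where
  "leonard_system d A As E Es \<longleftrightarrow>
     mult_free d A \<and> mult_free d As \<and>
     (\<exists>\<theta>. idem_ordering d A E \<theta>) \<and>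
     (\<exists>\<theta>s. idem_ordering d As Es \<theta>s) \<and>
     (\<forall>i\<le>d. \<forall>j\<le>d. (i > j + 1 \<or> j > i + 1) \<longrightarrow> E i * As * E j = 0\<^sub>m (d+1) (d+1)) \<and>
     (\<forall>i\<le>d. \<forall>j\<le>d. (i = j + 1 \<or> j = i + 1) \<longrightarrow> E i * As * E j \<noteq> 0\<^sub>m (d+1) (d+1)) \<and>
     (\<forall>i\<le>d. \<forall>j\<le>d. (i > j + 1 \<or> j > i + 1) \<longrightarrow> Es i * A * Es j = 0\<^sub>m (d+1) (d+1)) \<and>
     (\<forall>i\<le>d. \<forall>j\<le>d. (i = j + 1 \<or> j = i + 1) \<longrightarrow> Es i * A * Es j \<noteq> 0\<^sub>m (d+1) (d+1))"

definition lnu :: "('a::field) mat \<Rightarrow> 'a mat \<Rightarrow> 'a" where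
  "lnu E0 Es0 = 1 / mtrace (E0 * Es0)"

text \<open>Standard basis E*_0 u, ..., E*_d u of the irreducible module V = K^{d+1}
  (column vectors), for u in E_0 V.\<close>
definition std_basis_mat :: "nat \<Rightarrow> (nat \<Rightarrow> 'a::field mat) \<Rightarrow> 'a vec \<Rightarrow> 'a mat" where
  "std_basis_mat d Es u = mat_of_cols (d+1) (map (\<lambda>j. Es j *\<^sub>v u) [0..<d+1])"

definition std_matrix :: "nat \<Rightarrow> 'a::field mat \<Rightarrow> (nat \<Rightarrow> 'a mat) \<Rightarrow> 'a vec \<Rightarrow> 'a mat" where
  "std_matrix d A Es u = (THE B. B \<in> carrier_mat (d+1) (d+1) \<and>
      A * std_basis_mat d Es u = std_basis_mat d Es u * B)"

definition lc :: "nat \<Rightarrow> 'a::field mat \<Rightarrow> (nat \<Rightarrow> 'a mat) \<Rightarrow> 'a vec \<Rightarrow> nat \<Rightarrow> 'a" where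
  "lc d A Es u i = std_matrix d A Es u $$ (i, i - 1)"

end

theory Submission
  imports Defs
begin

definition dg :: "nat \<Rightarrow> (nat \<Rightarrow> 'a::comm_ring_1) \<Rightarrow> 'a mat" where
  "dg n f = mat n n (\<lambda>(i,j). if i = j then f i else 0)"
definition ek :: "nat \<Rightarrow> nat \<Rightarrow> 'a::comm_ring_1 mat" where
  "ek n k = dg n (\<lambda>i. if i = k then 1 else 0)"

lemma dg_carrier[simp]: "dg n f \<in> carrier_mat n n" by (simp add: dg_def)
lemma dg_dim[simp]: "dim_row (dg n f) = n" "dim_col (dg n f) = n" by (simp_all add: dg_def)
lemma ek_dim[simp]: "dim_row (ek n k) = n" "dim_col (ek n k) = n" by (simp_all add: ek_def)
lemma ek_carrier[simp]: "ek n k \<in> carrier_mat n n" by (simp add: ek_def)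
lemma dg_index[simp]: "i < n \<Longrightarrow> j < n \<Longrightarrow> dg n f $$ (i,j) = (if i = j then f i else 0)"
  by (simp add: dg_def)

lemma mult_dg_index: assumes "X \<in> carrier_mat m n" "i < m" "j < n"
  shows "(X * dg n f) $$ (i,j) = X $$ (i,j) * f j"
proof -
  have "(X * dg n f) $$ (i,j) = (\<Sum>l\<in>{0..<n}. X$$(i,l) * (if l = j then f l else 0))"
    using assms by (simp add: scalar_prod_def dg_def)
  also have "\<dots> = (\<Sum>l\<in>{0..<n}. if l = j then X$$(i,l) * f l else 0)"
    by (rule sum.cong) auto
  finally show ?thesis using assms by simp
qed
lemma dg_mult_index: assumes "X \<in> carrier_mat n m" "i < n" "j < m"
  shows "(dg n f * X) $$ (i,j) = f i * X $$ (i,j)"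
proof -
  have "(dg n f * X) $$ (i,j) = (\<Sum>l\<in>{0..<n}. (if i = l then f i else 0) * X$$(l,j))"
    using assms by (simp add: scalar_prod_def dg_def)
  also have "\<dots> = (\<Sum>l\<in>{0..<n}. if i = l then f i * X$$(l,j) else 0)"
    by (rule sum.cong) auto
  finally show ?thesis using assms by simp
qed

lemma mult_ek_index: assumes "X \<in> carrier_mat m n" "i < m" "j < n"
  shows "(X * ek n k) $$ (i,j) = (if j = k then X $$ (i,k) else 0)"
  using mult_dg_index[OF assms, of "\<lambda>i. if i = k then 1 else 0"] unfolding ek_def by auto

lemma ek_mult_index: assumes "X \<in> carrier_mat n m" "i < n" "j < m"
  shows "(ek n k * X) $$ (i,j) = (if i = k then X $$ (k,j) else 0)"
  using dg_mult_index[OF assms, of "\<lambda>i. if i = k then 1 else 0"] unfolding ek_def by auto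

lemma mult_zero_vec_right[simp]: "X \<in> carrier_mat m n \<Longrightarrow> X *\<^sub>v 0\<^sub>v n = 0\<^sub>v m"
  by (intro eq_vecI) (auto simp: scalar_prod_def)

lemma smult_mat_vec: assumes "N \<in> carrier_mat n n" "v \<in> carrier_vec n"
  shows "(c \<cdot>\<^sub>m N) *\<^sub>v v = c \<cdot>\<^sub>v (N *\<^sub>v v)"
  using assms by (intro eq_vecI) (auto simp: scalar_prod_def sum_distrib_left ac_simps)

lemma factor_eig: fixes M :: "'a::field mat"
  assumes M: "M \<in> carrier_mat n n" and v: "v \<in> carrier_vec n" and ev: "M *\<^sub>v v = l \<cdot>\<^sub>v v"
  shows "(c \<cdot>\<^sub>m (M - \<mu> \<cdot>\<^sub>m 1\<^sub>m n)) *\<^sub>v v = (c * (l - \<mu>)) \<cdot>\<^sub>v v"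
proof -
  have "(M - \<mu> \<cdot>\<^sub>m 1\<^sub>m n) *\<^sub>v v = M *\<^sub>v v - (\<mu> \<cdot>\<^sub>m 1\<^sub>m n) *\<^sub>v v"
    using M v by (simp add: minus_mult_distrib_mat_vec)
  also have "\<dots> = (l - \<mu>) \<cdot>\<^sub>v v" using v unfolding ev smult_mat_vec[OF one_carrier_mat v]
    by (intro eq_vecI) (auto simp: algebra_simps)
  finally have "(M - \<mu> \<cdot>\<^sub>m 1\<^sub>m n) *\<^sub>v v = (l - \<mu>) \<cdot>\<^sub>v v" .
  then show ?thesis using M v by (subst smult_mat_vec[of _ n]) (auto simp: smult_smult_assoc)
qed

lemma mat_prod_list_Cons[simp]: "mat_prod_list n (M # Ms) = M * mat_prod_list n Ms"
  by (simp add: mat_prod_list_def)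
lemma mat_prod_list_Nil[simp]: "mat_prod_list n [] = 1\<^sub>m n"
  by (simp add: mat_prod_list_def)
lemma mat_prod_list_carrier: "(\<And>M. M \<in> set Ms \<Longrightarrow> M \<in> carrier_mat n n) \<Longrightarrow> mat_prod_list n Ms \<in> carrier_mat n n"
proof (induction Ms)
  case (Cons a Ms)
  then show ?case by (metis list.set_intros mat_prod_list_Cons mult_carrier_mat)
qed simp

lemma prod_eig: fixes f :: "'b \<Rightarrow> 'a::field mat"
  assumes "\<And>x. x \<in> set xs \<Longrightarrow> f x \<in> carrier_mat n n \<and> f x *\<^sub>v v = g x \<cdot>\<^sub>v v"
    and v: "v \<in> carrier_vec n"
  shows "mat_prod_list n (map f xs) *\<^sub>v v = prod_list (map g xs) \<cdot>\<^sub>v v"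
  using assms(1)
proof (induction xs)
  case Nil then show ?case using v by simp
next
  case (Cons x xs)
  have P: "mat_prod_list n (map f xs) \<in> carrier_mat n n"
    using Cons.prems by (intro mat_prod_list_carrier) auto
  have fx: "f x \<in> carrier_mat n n" "f x *\<^sub>v v = g x \<cdot>\<^sub>v v" using Cons.prems by auto
  have "mat_prod_list n (map f (x # xs)) *\<^sub>v v = f x *\<^sub>v (mat_prod_list n (map f xs) *\<^sub>v v)"
    using P fx v by simp
  also have "\<dots> = f x *\<^sub>v (prod_list (map g xs) \<cdot>\<^sub>v v)" using Cons by simp
  also have "\<dots> = prod_list (map g xs) \<cdot>\<^sub>v (g x \<cdot>\<^sub>v v)" using fx v by (simp add: mult_mat_vec)
  also have "\<dots> = prod_list (map g (x # xs)) \<cdot>\<^sub>v v" by (simp add: smult_smult_assoc mult.commute)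
  finally show ?case .
qed

lemma prim_idem_carrier: assumes "M \<in> carrier_mat (d+1) (d+1)"
  shows "prim_idem d M lam k \<in> carrier_mat (d+1) (d+1)"
  unfolding prim_idem_def by (rule mat_prod_list_carrier) (use assms in \<open>auto simp del: upt_Suc\<close>)

lemma prod_list_ones: "\<forall>x\<in>set xs. x = 1 \<Longrightarrow> prod_list xs = 1"
  by (induction xs) auto

lemma prim_idem_eig: fixes M :: "'a::field mat"
  assumes M: "M \<in> carrier_mat (d+1) (d+1)" and inj: "inj_on lam {..d}"
    and k: "k \<le> d" and j: "j \<le> d" and v: "v \<in> carrier_vec (d+1)"
    and ev: "M *\<^sub>v v = lam j \<cdot>\<^sub>v v"
  shows "prim_idem d M lam k *\<^sub>v v = (if j = k then v else 0\<^sub>v (d+1))"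
proof -
  let ?L = "filter (\<lambda>i. i \<noteq> k) [0..<d+1]"
  let ?g = "\<lambda>i. (1 / (lam k - lam i)) * (lam j - lam i)"
  have "prim_idem d M lam k *\<^sub>v v = prod_list (map ?g ?L) \<cdot>\<^sub>v v"
    unfolding prim_idem_def
  proof (rule prod_eig[OF _ v])
    fix x assume "x \<in> set ?L"
    show "(1 / (lam k - lam x)) \<cdot>\<^sub>m (M - lam x \<cdot>\<^sub>m 1\<^sub>m (d + 1)) \<in> carrier_mat (d+1) (d+1) \<and>
      (1 / (lam k - lam x)) \<cdot>\<^sub>m (M - lam x \<cdot>\<^sub>m 1\<^sub>m (d + 1)) *\<^sub>v v = ?g x \<cdot>\<^sub>v v"
      using factor_eig[OF M v ev, of "1/(lam k - lam x)" "lam x"] M by auto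
  qed
  also have "prod_list (map ?g ?L) = (if j = k then 1 else 0)"
  proof (cases "j = k")
    case True
    have "\<forall>x\<in>set (map ?g ?L). x = 1"
    proof
      fix x assume "x \<in> set (map ?g ?L)"
      then obtain i where "i \<in> set ?L" "x = ?g i" by (auto simp del: upt_Suc)
      then have i: "i \<le> d" "i \<noteq> k" "x = ?g i" by (auto simp del: upt_Suc)
      have "lam k \<noteq> lam i" using inj_onD[OF inj, of k i] i k by auto
      then have "lam k - lam i \<noteq> 0" by simp
      then show "x = 1" using i True by simp
    qed
    then have "prod_list (map ?g ?L) = 1"
      by (rule prod_list_ones)
    then show ?thesis using True by simp
  next
    case False
    have "j \<in> set ?L" using False j by (auto simp del: upt_Suc)
    then have "?g j \<in> set (map ?g ?L)" unfolding set_map by (rule imageI)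
    then have "0 \<in> set (map ?g ?L)" by simp
    then show ?thesis using False by (simp add: prod_list_zero_iff)
  qed
  finally show ?thesis using v by auto
qed


lemma inverse_from_det: fixes Y :: "'a::field mat"
  assumes Y: "Y \<in> carrier_mat n n" and d: "det Y \<noteq> 0"
  shows "\<exists>Yi. Yi \<in> carrier_mat n n \<and> Y * Yi = 1\<^sub>m n \<and> Yi * Y = 1\<^sub>m n"
  using det_non_zero_imp_unit[OF Y d, of undefined]
  unfolding Units_def ring_mat_def by auto

lemma diagonalize: fixes M :: "'a::field mat"
  assumes M: "M \<in> carrier_mat (d+1) (d+1)" and io: "idem_ordering d M F lam"
  shows "\<exists>Y Yi. Y \<in> carrier_mat (d+1) (d+1) \<and> Yi \<in> carrier_mat (d+1) (d+1) \<and>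
     Y * Yi = 1\<^sub>m (d+1) \<and> Yi * Y = 1\<^sub>m (d+1) \<and> (\<forall>k\<le>d. F k = Y * ek (d+1) k * Yi) \<and>
     M * Y = Y * dg (d+1) lam"
proof -
  let ?n = "d+1"
  have inj: "inj_on lam {..d}" and evs: "\<forall>i\<le>d. eigenvalue M (lam i)"
    and Fk: "\<forall>k\<le>d. F k = prim_idem d M lam k"
    using io unfolding idem_ordering_def by auto
  have "\<forall>i\<in>{..d}. \<exists>v. eigenvector M v (lam i)" using evs unfolding eigenvalue_def by auto
  then obtain y where y: "\<And>i. i \<le> d \<Longrightarrow> eigenvector M (y i) (lam i)"
    by (metis atMost_iff)
  have yc: "y i \<in> carrier_vec ?n" and yn: "y i \<noteq> 0\<^sub>v ?n" and ye: "M *\<^sub>v y i = lam i \<cdot>\<^sub>v y i"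
    if "i \<le> d" for i
    using y[OF that] M unfolding eigenvector_def by auto
  define Y where "Y = mat ?n ?n (\<lambda>(i,j). y j $ i)"
  have Yc: "Y \<in> carrier_mat ?n ?n" unfolding Y_def by simp
  have colY: "col Y j = y j" if "j \<le> d" for j
    using yc[OF that] that unfolding Y_def by (intro eq_vecI) auto
  have FY: "F k * Y = Y * ek ?n k" if k: "k \<le> d" for k
  proof (rule eq_matI)
    fix i j assume i: "i < dim_row (Y * ek ?n k)" and j: "j < dim_col (Y * ek ?n k)"
    then have i': "i < ?n" and j': "j < ?n" using Yc by auto
    have Fc: "F k \<in> carrier_mat ?n ?n" using Fk k prim_idem_carrier[OF M] by auto
    have "(F k * Y) $$ (i,j) = (F k *\<^sub>v col Y j) $ i" using Fc Yc i' j' by simp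
    also have "\<dots> = (if j = k then y j $ i else 0)"
      using prim_idem_eig[OF M inj k _ yc ye, of j] Fk k j' i' colY[of j] by auto
    also have "\<dots> = (Y * ek ?n k) $$ (i,j)"
      unfolding ek_def using mult_dg_index[OF Yc i' j'] i' j' unfolding Y_def by auto
    finally show "(F k * Y) $$ (i,j) = (Y * ek ?n k) $$ (i,j)" .
  qed (insert Yc k Fk prim_idem_carrier[OF M], auto)
  have Fc: "F k \<in> carrier_mat ?n ?n" if "k \<le> d" for k
    using Fk that prim_idem_carrier[OF M] by auto
  have ekv: "((Y * ek ?n k) *\<^sub>v a) $ i = Y $$ (i,k) * a $ k"
    if "i < ?n" "k < ?n" "a \<in> carrier_vec ?n" for i k a
  proof -
    have "((Y * ek ?n k) *\<^sub>v a) $ i = (\<Sum>l\<in>{0..<?n}. (Y * ek ?n k) $$ (i,l) * a $ l)"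
      using that Yc by (simp add: scalar_prod_def)
    also have "\<dots> = (\<Sum>l\<in>{0..<?n}. if l = k then Y $$ (i,k) * a $ k else 0)"
      by (rule sum.cong) (use that Yc in \<open>auto simp: mult_ek_index simp del: index_mult_mat\<close>)
    finally show ?thesis using that by simp
  qed
  have inj: "a = 0\<^sub>v ?n" if a: "a \<in> carrier_vec ?n" and Ya: "Y *\<^sub>v a = 0\<^sub>v ?n" for a
  proof (rule eq_vecI)
    fix k assume "k < dim_vec (0\<^sub>v ?n :: 'a vec)"
    then have k: "k \<le> d" by simp
    have "(F k * Y) *\<^sub>v a = 0\<^sub>v ?n" using Fc[OF k] Yc a Ya by simp
    then have z: "Y $$ (i,k) * a $ k = 0" if "i < ?n" for i
      using ekv[OF that _ a, of k] FY[OF k] k that by (metis index_zero_vec(1) le_imp_less_Suc Suc_eq_plus1)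
    obtain i where i: "i < ?n" "y k $ i \<noteq> 0" using yn[OF k] yc[OF k] by (metis eq_vecI carrier_vecD index_zero_vec)
    have "Y $$ (i,k) = y k $ i" using i k unfolding Y_def by simp
    then show "a $ k = (0\<^sub>v ?n) $ k" using z[OF i(1)] i k by simp
  qed (use a in auto)
  have "det Y \<noteq> 0"
    using inj det_0_iff_vec_prod_zero[OF Yc] by auto
  then obtain Yi where Yi: "Yi \<in> carrier_mat ?n ?n" "Y * Yi = 1\<^sub>m ?n" "Yi * Y = 1\<^sub>m ?n"
    using inverse_from_det[OF Yc] by blast
  have "F k = Y * ek ?n k * Yi" if k: "k \<le> d" for k
  proof -
    have "F k = F k * (Y * Yi)" using Yi Fc[OF k] by simp
    also have "\<dots> = (F k * Y) * Yi" using Yi Fc[OF k] Yc by simp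
    finally show ?thesis using FY[OF k] by simp
  qed
  moreover have "M * Y = Y * dg ?n lam"
  proof (rule eq_matI)
    fix i j assume i: "i < dim_row (Y * dg ?n lam)" and j: "j < dim_col (Y * dg ?n lam)"
    then have i': "i < ?n" and j': "j < ?n" using Yc by auto
    have "(M * Y) $$ (i,j) = (M *\<^sub>v col Y j) $ i" using M Yc i' j' by simp
    also have "\<dots> = lam j * y j $ i" using ye[of j] colY[of j] yc[of j] i' j' by simp
    also have "\<dots> = (Y * dg ?n lam) $$ (i,j)"
      using mult_dg_index[OF Yc i' j'] i' j' unfolding Y_def by auto
    finally show "(M * Y) $$ (i,j) = (Y * dg ?n lam) $$ (i,j)" .
  qed (use M Yc in auto)
  ultimately show ?thesis using Yc Yi by blast
qed


lemma assoc_dim: "dim_col A = dim_row B \<Longrightarrow> dim_col B = dim_row C \<Longrightarrow> A * B * C = A * (B * C)"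
  by (rule assoc_mult_mat[of A "dim_row A" "dim_col A" B "dim_col B" C "dim_col C"]) auto

lemma ek_sandwich_index: assumes X: "X \<in> carrier_mat n n" and a: "a < n" and b: "b < n"
  and i: "i < n" and j: "j < n"
  shows "(ek n i * X * ek n j) $$ (a,b) = (if a = i \<and> b = j then X $$ (i,j) else 0)"
proof -
  have "(ek n i * X * ek n j) $$ (a,b) = (if b = j then (ek n i * X) $$ (a,j) else 0)"
    using assms by (subst mult_ek_index[of _ n n]) auto
  also have "\<dots> = (if a = i \<and> b = j then X $$ (i,j) else 0)"
    using assms by (auto simp: ek_mult_index simp del: index_mult_mat)
  finally show ?thesis .
qed

lemma idem_entry: fixes X :: "'a::field mat"
  assumes Y: "Y \<in> carrier_mat n n" and Yi: "Yi \<in> carrier_mat n n"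
    and YYi: "Y * Yi = 1\<^sub>m n" and YiY: "Yi * Y = 1\<^sub>m n"
    and X: "X \<in> carrier_mat n n" and i: "i < n" and j: "j < n"
  shows "Y * ek n i * Yi * X * (Y * ek n j * Yi) = 0\<^sub>m n n \<longleftrightarrow> (Yi * X * Y) $$ (i,j) = 0"
proof -
  define R where "R = Yi * X * Y"
  have R: "R \<in> carrier_mat n n" using Y Yi X unfolding R_def by simp
  have eq: "Y * ek n i * Yi * X * (Y * ek n j * Yi) = Y * (ek n i * R * ek n j) * Yi"
    using Y Yi X unfolding R_def by (simp add: assoc_dim)
  have S: "ek n i * R * ek n j \<in> carrier_mat n n" using R ek_carrier[of n i] ek_carrier[of n j] by (meson mult_carrier_mat)
  show ?thesis
  proof
    assume "Y * ek n i * Yi * X * (Y * ek n j * Yi) = 0\<^sub>m n n"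
    then have "Y * (ek n i * R * ek n j) * Yi = 0\<^sub>m n n" using eq by simp
    then have "Yi * (Y * (ek n i * R * ek n j) * Yi) * Y = Yi * 0\<^sub>m n n * Y" by simp
    also have "Yi * 0\<^sub>m n n * Y = 0\<^sub>m n n" using Y Yi by simp
    also have "Yi * (Y * (ek n i * R * ek n j) * Yi) * Y = (Yi * Y) * (ek n i * R * ek n j) * (Yi * Y)"
      using Y Yi S by (simp add: assoc_dim)
    finally have "ek n i * R * ek n j = 0\<^sub>m n n" using YiY S by simp
    then have "(ek n i * R * ek n j) $$ (i,j) = 0" using i j by simp
    then show "(Yi * X * Y) $$ (i,j) = 0" using ek_sandwich_index[OF R i j i j] unfolding R_def by simp
  next
    assume "(Yi * X * Y) $$ (i,j) = 0"
    then have "ek n i * R * ek n j = 0\<^sub>m n n"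
      using ek_sandwich_index[OF R _ _ i j] S unfolding R_def[symmetric] by (intro eq_matI) auto
    then show "Y * ek n i * Yi * X * (Y * ek n j * Yi) = 0\<^sub>m n n" using eq Y Yi by simp
  qed
qed

lemma conj_prod: fixes Z :: "'a::field mat"
  assumes Z: "Z \<in> carrier_mat n n" and Zi: "Zi \<in> carrier_mat n n" and ZZi: "Z * Zi = 1\<^sub>m n"
    and ZiZ: "Zi * Z = 1\<^sub>m n"
    and f: "\<And>x. x \<in> set xs \<Longrightarrow> f x \<in> carrier_mat n n"
  shows "Zi * mat_prod_list n (map f xs) * Z = mat_prod_list n (map (\<lambda>x. Zi * f x * Z) xs)"
  using f
proof (induction xs)
  case Nil then show ?case using ZiZ Zi by simp
next
  case (Cons x xs)
  have P: "mat_prod_list n (map f xs) \<in> carrier_mat n n"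
    using Cons.prems by (intro mat_prod_list_carrier) auto
  have fx: "f x \<in> carrier_mat n n" using Cons.prems by auto
  have "Zi * mat_prod_list n (map f (x # xs)) * Z = Zi * f x * (Z * Zi) * mat_prod_list n (map f xs) * Z"
    using Z Zi P fx ZZi by (simp add: assoc_dim)
  also have "\<dots> = (Zi * f x * Z) * (Zi * mat_prod_list n (map f xs) * Z)"
    using Z Zi P fx by (simp add: assoc_dim)
  also have "\<dots> = mat_prod_list n (map (\<lambda>x. Zi * f x * Z) (x # xs))" using Cons by simp
  finally show ?case .
qed

lemma tri_prod: fixes T :: "'a::field mat"
  assumes T: "T \<in> carrier_mat n n" and low: "\<And>i j. i < n \<Longrightarrow> j < n \<Longrightarrow> i > j+1 \<Longrightarrow> T$$(i,j) = 0"
  shows "(\<forall>i<n. i > length xs \<longrightarrow> mat_prod_list n (map (\<lambda>x. c x \<cdot>\<^sub>m (T - \<mu> x \<cdot>\<^sub>m 1\<^sub>m n)) xs) $$ (i,0) = 0) \<and>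
    (length xs < n \<longrightarrow> mat_prod_list n (map (\<lambda>x. c x \<cdot>\<^sub>m (T - \<mu> x \<cdot>\<^sub>m 1\<^sub>m n)) xs) $$ (length xs, 0)
        = prod_list (map c xs) * (\<Prod>i\<in>{1..length xs}. T$$(i,i-1)))"
proof (induction xs)
  case Nil then show ?case by auto
next
  case (Cons x xs)
  let ?f = "\<lambda>x. c x \<cdot>\<^sub>m (T - \<mu> x \<cdot>\<^sub>m 1\<^sub>m n)"
  let ?P = "mat_prod_list n (map ?f xs)"
  let ?m = "length xs"
  have P: "?P \<in> carrier_mat n n" using T by (intro mat_prod_list_carrier) (auto simp: minus_carrier_mat)
  have N: "?f x \<in> carrier_mat n n" using T by (simp add: minus_carrier_mat)
  have ent: "(?f x * ?P) $$ (i,0) = (\<Sum>l\<in>{0..<n}. c x * (T$$(i,l) - \<mu> x * (if i = l then 1 else 0)) * ?P $$ (l,0))"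
    if "i < n" for i
    using that T P by (auto simp: scalar_prod_def intro!: sum.cong)
  have IH1: "?P $$ (l,0) = 0" if "l < n" "l > ?m" for l using Cons.IH that by auto
  have A: "(?f x * ?P) $$ (i,0) = 0" if i: "i < n" "i > Suc ?m" for i
  proof -
    have "(\<Sum>l\<in>{0..<n}. c x * (T$$(i,l) - \<mu> x * (if i = l then 1 else 0)) * ?P $$ (l,0)) = 0"
    proof (rule sum.neutral, rule ballI)
      fix l assume l: "l \<in> {0..<n}"
      show "c x * (T$$(i,l) - \<mu> x * (if i = l then 1 else 0)) * ?P $$ (l,0) = 0"
      proof (cases "l > ?m")
        case True then show ?thesis using IH1[of l] l by simp
      next
        case False then show ?thesis using low[of i l] i l by auto
      qed
    qed
    then show ?thesis using ent[OF i(1)] by simp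
  qed
  have B: "(?f x * ?P) $$ (Suc ?m,0) = c x * T $$ (Suc ?m, ?m) * ?P $$ (?m, 0)" if m: "Suc ?m < n"
  proof -
    let ?g = "\<lambda>l. c x * (T$$(Suc ?m,l) - \<mu> x * (if Suc ?m = l then 1 else 0)) * ?P $$ (l,0)"
    have "(\<Sum>l\<in>{0..<n}. ?g l) = ?g ?m + (\<Sum>l\<in>{0..<n} - {?m}. ?g l)"
      using m by (subst sum.remove[of _ ?m]) auto
    also have "(\<Sum>l\<in>{0..<n} - {?m}. ?g l) = 0"
    proof (rule sum.neutral, rule ballI)
      fix l assume l: "l \<in> {0..<n} - {?m}"
      show "?g l = 0"
      proof (cases "l > ?m")
        case True then show ?thesis using IH1[of l] l by simp
      next
        case False then show ?thesis using low[of "Suc ?m" l] m l by auto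
      qed
    qed
    finally show ?thesis using ent[OF m] by simp
  qed
  show ?case
  proof (intro conjI allI impI)
    fix i assume "i < n" "length (x # xs) < i"
    then show "mat_prod_list n (map ?f (x # xs)) $$ (i, 0) = 0" using A by simp
  next
    assume m: "length (x # xs) < n"
    have "mat_prod_list n (map ?f (x # xs)) $$ (length (x # xs), 0) = c x * T $$ (Suc ?m, ?m) * ?P $$ (?m, 0)"
      using B m by simp
    also have "?P $$ (?m, 0) = prod_list (map c xs) * (\<Prod>i\<in>{1..?m}. T$$(i,i-1))"
      using Cons.IH m by simp
    also have "c x * T $$ (Suc ?m, ?m) * (prod_list (map c xs) * (\<Prod>i\<in>{1..?m}. T$$(i,i-1)))
       = prod_list (map c (x # xs)) * (\<Prod>i\<in>{1..length (x#xs)}. T$$(i,i-1))"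
      by (simp add: prod.nat_ivl_Suc' ac_simps)
    finally show "mat_prod_list n (map ?f (x # xs)) $$ (length (x # xs), 0) =
       prod_list (map c (x # xs)) * (\<Prod>i\<in>{1..length (x#xs)}. T$$(i,i-1))" .
  qed
qed


lemma ek_mid_index: assumes X: "X \<in> carrier_mat m n" and W: "W \<in> carrier_mat n p"
  and i: "i < m" and j: "j < p" and k: "k < n"
  shows "(X * ek n k * W) $$ (i,j) = X $$ (i,k) * W $$ (k,j)"
proof -
  have "(X * ek n k * W) $$ (i,j) = (\<Sum>l\<in>{0..<n}. (X * ek n k) $$ (i,l) * W $$ (l,j))"
    using assms by (subst index_mult_mat(1)) (auto simp: scalar_prod_def simp del: index_mult_mat(1) intro!: sum.cong)
  also have "\<dots> = (\<Sum>l\<in>{0..<n}. if l = k then X $$ (i,k) * W $$ (k,j) else 0)"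
    by (rule sum.cong) (use assms in \<open>auto simp: mult_ek_index simp del: index_mult_mat\<close>)
  finally show ?thesis using k by simp
qed

lemma vec_ek_mid: assumes X: "X \<in> carrier_mat m n" and W: "W \<in> carrier_mat n p"
  and w: "w \<in> carrier_vec p" and i: "i < m" and k: "k < n"
  shows "((X * ek n k * W) *\<^sub>v w) $ i = X $$ (i,k) * (W *\<^sub>v w) $ k"
proof -
  have "((X * ek n k * W) *\<^sub>v w) $ i = (\<Sum>l\<in>{0..<p}. (X * ek n k * W) $$ (i,l) * w $ l)"
    using assms by (simp add: scalar_prod_def del: index_mult_mat(1))
  also have "\<dots> = (\<Sum>l\<in>{0..<p}. X $$ (i,k) * (W $$ (k,l) * w $ l))"
    by (rule sum.cong) (use assms in \<open>auto simp: ek_mid_index simp del: index_mult_mat\<close>)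
  also have "\<dots> = X $$ (i,k) * (W *\<^sub>v w) $ k"
    using assms by (simp add: scalar_prod_def sum_distrib_left)
  finally show ?thesis .
qed

lemma dg_sandwich_index: assumes T: "T \<in> carrier_mat n n" and i: "i < n" and j: "j < n"
  shows "(dg n f * T * dg n g) $$ (i,j) = f i * T $$ (i,j) * g j"
proof -
  have "(dg n f * T * dg n g) $$ (i,j) = (dg n f * T) $$ (i,j) * g j"
    by (rule mult_dg_index[of _ n n]) (use assms in auto)
  also have "(dg n f * T) $$ (i,j) = f i * T $$ (i,j)"
    by (rule dg_mult_index[of _ n n]) (use assms in auto)
  finally show ?thesis .
qed

lemma dg_mult_dg: "dg n f * dg n g = dg n (\<lambda>i. f i * g i)"
  by (rule eq_matI) (auto simp: dg_mult_index[of _ n n] simp del: index_mult_mat(1))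

lemma dg_one: "dg n (\<lambda>i. 1) = 1\<^sub>m n"
  by (rule eq_matI) auto

lemma conj_factor: fixes A :: "'a::field mat"
  assumes A: "A \<in> carrier_mat n n" and Z: "Z \<in> carrier_mat n n" and Zi: "Zi \<in> carrier_mat n n"
    and ZiZ: "Zi * Z = 1\<^sub>m n"
  shows "Zi * (c \<cdot>\<^sub>m (A - \<mu> \<cdot>\<^sub>m 1\<^sub>m n)) * Z = c \<cdot>\<^sub>m (Zi * A * Z - \<mu> \<cdot>\<^sub>m 1\<^sub>m n)"
proof -
  have M: "A - \<mu> \<cdot>\<^sub>m 1\<^sub>m n \<in> carrier_mat n n" using A by (simp add: minus_carrier_mat)
  have "Zi * (c \<cdot>\<^sub>m (A - \<mu> \<cdot>\<^sub>m 1\<^sub>m n)) * Z = c \<cdot>\<^sub>m (Zi * (A - \<mu> \<cdot>\<^sub>m 1\<^sub>m n) * Z)"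
    using M Zi Z by (simp add: mult_smult_distrib[of _ n n] mult_smult_assoc_mat[of _ n n])
  also have "Zi * (A - \<mu> \<cdot>\<^sub>m 1\<^sub>m n) = Zi * A - \<mu> \<cdot>\<^sub>m Zi"
  proof -
    have "Zi * (\<mu> \<cdot>\<^sub>m 1\<^sub>m n) = \<mu> \<cdot>\<^sub>m (Zi * 1\<^sub>m n)" using mult_smult_distrib[OF Zi one_carrier_mat] by simp
    also have "Zi * 1\<^sub>m n = Zi" using Zi by simp
    finally show ?thesis using A Zi by (simp add: mult_minus_distrib_mat[of _ n n])
  qed
  also have "(Zi * A - \<mu> \<cdot>\<^sub>m Zi) * Z = Zi * A * Z - \<mu> \<cdot>\<^sub>m 1\<^sub>m n"
    using A Zi Z ZiZ by (simp add: minus_mult_distrib_mat[of _ n n] mult_smult_assoc_mat[of _ n n])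
  finally show ?thesis .
qed

lemma sum_single: "finite S \<Longrightarrow> a \<in> S \<Longrightarrow> (\<And>l. l \<in> S \<Longrightarrow> l \<noteq> a \<Longrightarrow> f l = 0) \<Longrightarrow> sum f S = f a"
  by (subst sum.remove[of S a]) (auto intro: sum.neutral)

lemma telescope: fixes b t :: "nat \<Rightarrow> 'a::field"
  assumes "\<And>k. k \<le> d \<Longrightarrow> b k \<noteq> 0"
  shows "(\<Prod>i\<in>{1..d}. 1 / b i * t i * b (i-1)) = (\<Prod>i\<in>{1..d}. t i) * (b 0 / b d)"
  using assms
proof (induction d)
  case 0 then show ?case by simp
next
  case (Suc d)
  have "(\<Prod>i\<in>{1..Suc d}. 1 / b i * t i * b (i-1)) = (1 / b (Suc d) * t (Suc d) * b d) * (\<Prod>i\<in>{1..d}. 1 / b i * t i * b (i-1))"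
    by (simp add: prod.nat_ivl_Suc')
  also have "\<dots> = (1 / b (Suc d) * t (Suc d) * b d) * ((\<Prod>i\<in>{1..d}. t i) * (b 0 / b d))"
    using Suc by simp
  also have "\<dots> = (\<Prod>i\<in>{1..Suc d}. t i) * (b 0 / b (Suc d))"
    using Suc.prems[of d] by (simp add: prod.nat_ivl_Suc' field_simps)
  finally show ?case .
qed

lemma filter_nz: "filter (\<lambda>j. j \<noteq> 0) [0..<d+1] = [1..<d+1]"
  by (induction d) auto



lemma dg_cong: "(\<And>i. i < n \<Longrightarrow> f i = g i) \<Longrightarrow> dg n f = dg n g"
  by (rule eq_matI) auto

lemma sq_mult_carrier[simp]: "A \<in> carrier_mat n n \<Longrightarrow> B \<in> carrier_mat n n \<Longrightarrow> A * B \<in> carrier_mat n n"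
  by (rule mult_carrier_mat)

theorem theorem11p5:
  fixes d :: nat and A As :: "'a::field mat" and E Es :: "nat \<Rightarrow> 'a mat"
    and \<theta> :: "nat \<Rightarrow> 'a" and u :: "'a vec"
  assumes "leonard_system d A As E Es"
    and "idem_ordering d A E \<theta>"
    and "u \<in> carrier_vec (d+1)" and "u \<noteq> 0\<^sub>v (d+1)"
    and "\<exists>w \<in> carrier_vec (d+1). u = E 0 *\<^sub>v w"
  shows "(\<Prod>i\<in>{1..d}. \<theta> 0 - \<theta> i) = lnu (E 0) (Es 0) * (\<Prod>i\<in>{1..d}. lc d A Es u i)"
proof -
  let ?n = "d+1"
  note ls = assms(1)[unfolded leonard_system_def]
  have A: "A \<in> carrier_mat ?n ?n" and As: "As \<in> carrier_mat ?n ?n"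
    using ls unfolding mult_free_def by auto
  obtain \<theta>s where ios: "idem_ordering d As Es \<theta>s" using ls by auto
  have io: "idem_ordering d A E \<theta>" by (rule assms(2))
  have inj\<theta>: "inj_on \<theta> {..d}" and Ep: "\<forall>k\<le>d. E k = prim_idem d A \<theta> k"
    using io unfolding idem_ordering_def by auto
  have zA: "\<And>i j. i \<le> d \<Longrightarrow> j \<le> d \<Longrightarrow> i > j + 1 \<or> j > i + 1 \<Longrightarrow> E i * As * E j = 0\<^sub>m ?n ?n"
    and nzA: "\<And>i j. i \<le> d \<Longrightarrow> j \<le> d \<Longrightarrow> i = j + 1 \<or> j = i + 1 \<Longrightarrow> E i * As * E j \<noteq> 0\<^sub>m ?n ?n"
    and zEs: "\<And>i j. i \<le> d \<Longrightarrow> j \<le> d \<Longrightarrow> i > j + 1 \<or> j > i + 1 \<Longrightarrow> Es i * A * Es j = 0\<^sub>m ?n ?n"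
    and nzEs: "\<And>i j. i \<le> d \<Longrightarrow> j \<le> d \<Longrightarrow> i = j + 1 \<or> j = i + 1 \<Longrightarrow> Es i * A * Es j \<noteq> 0\<^sub>m ?n ?n"
    using ls by blast+
  obtain Y Yi where Yc: "Y \<in> carrier_mat ?n ?n" and Yic: "Yi \<in> carrier_mat ?n ?n"
    and YYi: "Y * Yi = 1\<^sub>m ?n" and YiY: "Yi * Y = 1\<^sub>m ?n"
    and Yek: "\<forall>k\<le>d. E k = Y * ek ?n k * Yi"
    using diagonalize[OF A io] by blast
  obtain Z Zi where Zc: "Z \<in> carrier_mat ?n ?n" and Zic: "Zi \<in> carrier_mat ?n ?n"
    and ZZi: "Z * Zi = 1\<^sub>m ?n" and ZiZ: "Zi * Z = 1\<^sub>m ?n"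
    and Zek: "\<forall>k\<le>d. Es k = Z * ek ?n k * Zi" and AsZ: "As * Z = Z * dg ?n \<theta>s"
    using diagonalize[OF As ios] by blast
  define T where "T = Zi * A * Z"
  define R where "R = Yi * As * Y"
  define H where "H = Zi * Y"
  define G where "G = Yi * Z"
  have Tc: "T \<in> carrier_mat ?n ?n" unfolding T_def using Zc Zic A by simp
  have Rc: "R \<in> carrier_mat ?n ?n" unfolding R_def using Yc Yic As by simp
  have Hc: "H \<in> carrier_mat ?n ?n" unfolding H_def using Zic Yc by simp
  have Gc: "G \<in> carrier_mat ?n ?n" unfolding G_def using Yic Zc by simp
  have Tz: "T $$ (i,j) = 0" if "i \<le> d" "j \<le> d" "i > j+1" for i j
  proof -
    have "Es i * A * Es j = 0\<^sub>m ?n ?n" using zEs that by auto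
    then have "Z * ek ?n i * Zi * A * (Z * ek ?n j * Zi) = 0\<^sub>m ?n ?n" using Zek that by simp
    then show ?thesis using idem_entry[OF Zc Zic ZZi ZiZ A, of i j] that unfolding T_def by simp
  qed
  have Tnz: "T $$ (i,i-1) \<noteq> 0" if "1 \<le> i" "i \<le> d" for i
  proof -
    have "Es i * A * Es (i-1) \<noteq> 0\<^sub>m ?n ?n" using nzEs[of i "i-1"] that by auto
    then have "Z * ek ?n i * Zi * A * (Z * ek ?n (i-1) * Zi) \<noteq> 0\<^sub>m ?n ?n" using Zek that by simp
    then show ?thesis using idem_entry[OF Zc Zic ZZi ZiZ A, of i "i-1"] that unfolding T_def by simp
  qed
  have Rz: "R $$ (i,j) = 0" if "i \<le> d" "j \<le> d" "i > j+1" for i j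
  proof -
    have "E i * As * E j = 0\<^sub>m ?n ?n" using zA that by auto
    then have "Y * ek ?n i * Yi * As * (Y * ek ?n j * Yi) = 0\<^sub>m ?n ?n" using Yek that by simp
    then show ?thesis using idem_entry[OF Yc Yic YYi YiY As, of i j] that unfolding R_def by simp
  qed
  have Rnz: "R $$ (Suc m, m) \<noteq> 0" if "Suc m \<le> d" for m
  proof -
    have "E (Suc m) * As * E m \<noteq> 0\<^sub>m ?n ?n" using nzA[of "Suc m" m] that by auto
    then have "Y * ek ?n (Suc m) * Yi * As * (Y * ek ?n m * Yi) \<noteq> 0\<^sub>m ?n ?n" using Yek that by simp
    then show ?thesis using idem_entry[OF Yc Yic YYi YiY As, of "Suc m" m] that unfolding R_def by simp
  qed
  have ZiAs: "Zi * As = dg ?n \<theta>s * Zi"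
  proof -
    have "Zi * As = Zi * As * (Z * Zi)" using ZZi Zic As by simp
    also have "\<dots> = Zi * (As * Z) * Zi" using Zic As Zc by (simp add: assoc_dim)
    also have "\<dots> = (Zi * Z) * dg ?n \<theta>s * Zi" unfolding AsZ using Zic Zc by (simp add: assoc_dim)
    finally show ?thesis using ZiZ by simp
  qed
  have HR: "H * R = dg ?n \<theta>s * H"
  proof -
    have "H * R = Zi * (Y * Yi) * As * Y" unfolding H_def R_def using Zic Yc Yic As by (simp add: assoc_dim)
    also have "\<dots> = (Zi * As) * Y" using YYi Zic As Yc by (simp add: assoc_dim)
    also have "\<dots> = dg ?n \<theta>s * H" unfolding ZiAs H_def using Zic Yc by (simp add: assoc_dim)
    finally show ?thesis .
  qed
  have HG: "H * G = 1\<^sub>m ?n"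
  proof -
    have "H * G = Zi * (Y * Yi) * Z" unfolding H_def G_def using Zic Yc Yic Zc by (simp add: assoc_dim)
    then show ?thesis using YYi ZiZ Zic by simp
  qed
  have HRe: "(\<Sum>j\<in>{0..<?n}. H $$ (k,j) * R $$ (j,m)) = \<theta>s k * H $$ (k,m)" if "k < ?n" "m < ?n" for k m
  proof -
    have "(H * R) $$ (k,m) = (\<Sum>j\<in>{0..<?n}. H $$ (k,j) * R $$ (j,m))"
      using that Hc Rc by (auto simp: scalar_prod_def intro!: sum.cong)
    moreover have "(dg ?n \<theta>s * H) $$ (k,m) = \<theta>s k * H $$ (k,m)"
      by (rule dg_mult_index[OF Hc that])
    ultimately show ?thesis using HR by simp
  qed
  have Hk0: "H $$ (k,0) \<noteq> 0" if k: "k \<le> d" for k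
  proof
    assume h0: "H $$ (k,0) = 0"
    have "\<forall>l\<le>m. H $$ (k,l) = 0" if "m \<le> d" for m
      using that
    proof (induction m)
      case 0 then show ?case using h0 by simp
    next
      case (Suc m)
      have IH: "\<forall>l\<le>m. H $$ (k,l) = 0" using Suc by simp
      have "(\<Sum>j\<in>{0..<?n}. H $$ (k,j) * R $$ (j,m)) = \<theta>s k * H $$ (k,m)"
        using HRe[of k m] k Suc.prems by simp
      also have "\<dots> = 0" using IH by simp
      also have "(\<Sum>j\<in>{0..<?n}. H $$ (k,j) * R $$ (j,m)) = H $$ (k, Suc m) * R $$ (Suc m, m)"
      proof (rule sum_single)
        fix l assume l: "l \<in> {0..<?n}" "l \<noteq> Suc m"
        show "H $$ (k,l) * R $$ (l,m) = 0"
        proof (cases "l \<le> m")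
          case True then show ?thesis using IH by simp
        next
          case False then show ?thesis using Rz[of l m] l Suc.prems by simp
        qed
      qed (use Suc.prems in auto)
      finally have "H $$ (k, Suc m) = 0" using Rnz[OF Suc.prems] by simp
      then show ?case using IH le_Suc_eq by auto
    qed
    then have allz: "\<forall>l\<le>d. H $$ (k,l) = 0" by simp
    have "(H * G) $$ (k,k) = (\<Sum>j\<in>{0..<?n}. H $$ (k,j) * G $$ (j,k))"
      using k Hc Gc by (auto simp: scalar_prod_def intro!: sum.cong)
    also have "\<dots> = 0" using allz by (intro sum.neutral) auto
    finally show False using HG k by simp
  qed
  define \<pi> where "\<pi> = (\<Prod>i\<in>{1..d}. \<theta> 0 - \<theta> i)"
  define \<tau> where "\<tau> = (\<Prod>i\<in>{1..d}. T $$ (i,i-1))"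
  have pinz: "\<pi> \<noteq> 0"
  proof -
    have "\<theta> 0 - \<theta> i \<noteq> 0" if "i \<in> {1..d}" for i
      using inj_onD[OF inj\<theta>, of 0 i] that by auto
    then show ?thesis unfolding \<pi>_def by simp
  qed
  have taunz: "\<tau> \<noteq> 0" unfolding \<tau>_def using Tnz by simp
  have E0: "E 0 = Y * ek ?n 0 * Yi" and Es0: "Es 0 = Z * ek ?n 0 * Zi" using Yek Zek by auto
  have ZE0Z: "Zi * E 0 * Z = H * ek ?n 0 * G"
    unfolding E0 H_def G_def using Zic Yc Yic Zc by (simp add: assoc_dim)
  let ?c = "\<lambda>j. 1 / (\<theta> 0 - \<theta> j)"
  let ?f = "\<lambda>j. ?c j \<cdot>\<^sub>m (A - \<theta> j \<cdot>\<^sub>m 1\<^sub>m ?n)"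
  have "E 0 = prim_idem d A \<theta> 0" using Ep by simp
  also have "\<dots> = mat_prod_list ?n (map ?f [1..<d+1])" by (simp only: prim_idem_def filter_nz)
  finally have "Zi * E 0 * Z = Zi * mat_prod_list ?n (map ?f [1..<d+1]) * Z" by simp
  also have "\<dots> = mat_prod_list ?n (map (\<lambda>j. Zi * ?f j * Z) [1..<d+1])"
    by (rule conj_prod[OF Zc Zic ZZi ZiZ]) (use A in \<open>simp add: minus_carrier_mat\<close>)
  also have "map (\<lambda>j. Zi * ?f j * Z) [1..<d+1] = map (\<lambda>j. ?c j \<cdot>\<^sub>m (T - \<theta> j \<cdot>\<^sub>m 1\<^sub>m ?n)) [1..<d+1]"
    unfolding T_def using conj_factor[OF A Zc Zic ZiZ] by simp
  finally have ZE0Z': "Zi * E 0 * Z = mat_prod_list ?n (map (\<lambda>j. ?c j \<cdot>\<^sub>m (T - \<theta> j \<cdot>\<^sub>m 1\<^sub>m ?n)) [1..<d+1])" .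
  have "mat_prod_list ?n (map (\<lambda>j. ?c j \<cdot>\<^sub>m (T - \<theta> j \<cdot>\<^sub>m 1\<^sub>m ?n)) [1..<d+1]) $$ (d,0)
     = prod_list (map ?c [1..<d+1]) * \<tau>"
  proof -
    have low: "T $$ (i,j) = 0" if "i < ?n" "j < ?n" "i > j+1" for i j using Tz that by simp
    have L: "length [1..<d+1] = d" by simp
    show ?thesis
      using conjunct2[OF tri_prod[OF Tc low, where xs="[1..<d+1]" and c="?c" and \<mu>=\<theta>]]
      unfolding \<tau>_def L by (simp del: upt_Suc)
  qed
  also have "prod_list (map ?c [1..<d+1]) = (\<Prod>j\<in>{1..d}. ?c j)"
  proof -
    have "prod_list (map ?c [1..<d+1]) = (\<Prod>j\<in>set [1..<d+1]. ?c j)"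
      by (rule prod.distinct_set_conv_list[symmetric]) simp
    also have "set [1..<d+1] = {1..d}" by (simp only: set_upt) auto
    finally show ?thesis .
  qed
  also have "\<dots> = 1 / \<pi>" unfolding \<pi>_def by (simp add: prod_dividef)
  finally have "(Zi * E 0 * Z) $$ (d,0) = 1 / \<pi> * \<tau>" using ZE0Z' by simp
  then have eqA: "H $$ (d,0) * G $$ (0,0) = \<tau> / \<pi>"
    unfolding ZE0Z using ek_mid_index[OF Hc Gc, of d 0 0] by simp
  have tr: "mtrace (E 0 * Es 0) = G $$ (0,0) * H $$ (0,0)"
  proof -
    have EE: "E 0 * Es 0 = Y * ek ?n 0 * (G * ek ?n 0 * Zi)"
      unfolding E0 Es0 G_def using Yc Yic Zc Zic by (simp add: assoc_dim)
    have G2: "G * ek ?n 0 * Zi \<in> carrier_mat ?n ?n" using Gc Zic ek_carrier[of ?n 0] by (meson mult_carrier_mat)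
    have dr: "dim_row (E 0 * Es 0) = ?n" unfolding EE using Yc by simp
    have "mtrace (E 0 * Es 0) = (\<Sum>i\<in>{0..<?n}. (E 0 * Es 0) $$ (i,i))"
      unfolding mtrace_def dr by (simp add: atLeast0LessThan)
    also have "\<dots> = (\<Sum>i\<in>{0..<?n}. G $$ (0,0) * (Zi $$ (0,i) * Y $$ (i,0)))"
    proof (rule sum.cong)
      fix i assume i: "i \<in> {0..<?n}"
      have "(E 0 * Es 0) $$ (i,i) = Y $$ (i,0) * (G * ek ?n 0 * Zi) $$ (0,i)"
        unfolding EE using ek_mid_index[OF Yc G2, of i i 0] i by simp
      also have "(G * ek ?n 0 * Zi) $$ (0,i) = G $$ (0,0) * Zi $$ (0,i)"
        using ek_mid_index[OF Gc Zic, of 0 i 0] i by simp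
      finally show "(E 0 * Es 0) $$ (i,i) = G $$ (0,0) * (Zi $$ (0,i) * Y $$ (i,0))" by simp
    qed simp
    also have "\<dots> = G $$ (0,0) * H $$ (0,0)"
      unfolding H_def using Zic Yc by (simp add: sum_distrib_left[symmetric] scalar_prod_def)
    finally show ?thesis .
  qed
  obtain w where w: "w \<in> carrier_vec ?n" and uw: "u = E 0 *\<^sub>v w" using assms(5) by blast
  define \<alpha> where "\<alpha> = (Yi *\<^sub>v w) $ 0"
  have ui: "u $ i = Y $$ (i,0) * \<alpha>" if "i < ?n" for i
    unfolding uw E0 \<alpha>_def using vec_ek_mid[OF Yc Yic w that, of 0] by simp
  have anz: "\<alpha> \<noteq> 0"
  proof
    assume "\<alpha> = 0"
    then have "u = 0\<^sub>v ?n" using ui assms(3) by (intro eq_vecI) auto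
    then show False using assms(4) by simp
  qed
  define \<beta> where "\<beta> = (\<lambda>k. (Zi *\<^sub>v u) $ k)"
  have beta: "\<beta> k = H $$ (k,0) * \<alpha>" if "k < ?n" for k
  proof -
    have E0c: "E 0 \<in> carrier_mat ?n ?n" unfolding E0 using Yc Yic ek_carrier[of ?n 0] by (meson mult_carrier_mat)
    have "Zi *\<^sub>v u = (Zi * E 0) *\<^sub>v w"
      unfolding uw using assoc_mult_mat_vec[OF Zic E0c w] by simp
    also have "Zi * E 0 = H * ek ?n 0 * Yi"
      unfolding E0 H_def using Zic Yc Yic by (simp add: assoc_dim)
    finally have "Zi *\<^sub>v u = (H * ek ?n 0 * Yi) *\<^sub>v w" .
    then show ?thesis unfolding \<beta>_def \<alpha>_def using vec_ek_mid[OF Hc Yic w that, of 0] by simp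
  qed
  have bnz: "\<beta> k \<noteq> 0" if "k \<le> d" for k using beta[of k] Hk0[OF that] anz that by simp
  define S where "S = std_basis_mat d Es u"
  have S: "S = Z * dg ?n \<beta>"
  proof (rule eq_matI)
    fix i j assume i: "i < dim_row (Z * dg ?n \<beta>)" and j: "j < dim_col (Z * dg ?n \<beta>)"
    then have i': "i < ?n" and j': "j < ?n" using Zc by auto
    have "S $$ (i,j) = (Es j *\<^sub>v u) $ i"
      unfolding S_def std_basis_mat_def using i' j' by (simp add: mat_of_cols_index del: upt_Suc)
    also have "\<dots> = Z $$ (i,j) * \<beta> j"
      using Zek j' vec_ek_mid[OF Zc Zic assms(3) i' j'] unfolding \<beta>_def by simp
    also have "\<dots> = (Z * dg ?n \<beta>) $$ (i,j)" using mult_dg_index[OF Zc i' j'] by simp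
    finally show "S $$ (i,j) = (Z * dg ?n \<beta>) $$ (i,j)" .
  qed (use Zc in \<open>auto simp: S_def std_basis_mat_def\<close>)
  define B0 where "B0 = dg ?n (\<lambda>k. 1 / \<beta> k) * T * dg ?n \<beta>"
  have B0c: "B0 \<in> carrier_mat ?n ?n" unfolding B0_def using Tc by simp
  have Sc: "S \<in> carrier_mat ?n ?n" unfolding S using Zc by simp
  have DD: "dg ?n \<beta> * dg ?n (\<lambda>k. 1 / \<beta> k) = 1\<^sub>m ?n"
    unfolding dg_mult_dg dg_one[symmetric] by (rule dg_cong) (use bnz in auto)
  have DD': "dg ?n (\<lambda>k. 1 / \<beta> k) * dg ?n \<beta> = 1\<^sub>m ?n"
    unfolding dg_mult_dg dg_one[symmetric] by (rule dg_cong) (use bnz in auto)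
  have AZ: "A * Z = Z * T"
  proof -
    have "Z * T = (Z * Zi) * A * Z" unfolding T_def using Zc Zic A by (simp add: assoc_dim)
    then show ?thesis using ZZi A by simp
  qed
  have ASB0: "A * S = S * B0"
  proof -
    have "A * S = (A * Z) * dg ?n \<beta>" unfolding S using A Zc by (simp add: assoc_dim)
    also have "\<dots> = Z * T * dg ?n \<beta>" unfolding AZ ..
    also have "\<dots> = Z * (dg ?n \<beta> * dg ?n (\<lambda>k. 1 / \<beta> k)) * T * dg ?n \<beta>"
      unfolding DD using Zc by simp
    also have "\<dots> = S * B0" unfolding S B0_def using Zc Tc by (simp add: assoc_dim)
    finally show ?thesis .
  qed
  have SM: "std_matrix d A Es u = B0"
    unfolding std_matrix_def S_def[symmetric]
  proof (rule the_equality)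
    show "B0 \<in> carrier_mat ?n ?n \<and> A * S = S * B0" using B0c ASB0 by simp
  next
    fix B assume B0': "B \<in> carrier_mat ?n ?n \<and> A * S = S * B"
    then have B: "B \<in> carrier_mat ?n ?n" and ASB: "A * S = S * B" by auto
    have "B = (dg ?n (\<lambda>k. 1 / \<beta> k) * (Zi * Z) * dg ?n \<beta>) * B"
    proof -
      have "dg ?n (\<lambda>k. 1 / \<beta> k) * (Zi * Z) * dg ?n \<beta> = 1\<^sub>m ?n" using ZiZ DD' by simp
      then show ?thesis using B left_mult_one_mat[of B ?n ?n] by simp
    qed
    also have "\<dots> = dg ?n (\<lambda>k. 1 / \<beta> k) * Zi * (S * B)"
      unfolding S using Zc Zic B by (simp add: assoc_dim)
    also have "\<dots> = dg ?n (\<lambda>k. 1 / \<beta> k) * Zi * (A * Z) * dg ?n \<beta>"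
      unfolding ASB[symmetric] unfolding S using Zc Zic A by (simp add: assoc_dim)
    also have "\<dots> = B0" unfolding B0_def T_def using Zc Zic A by (simp add: assoc_dim)
    finally show "B = B0" .
  qed
  have lci: "lc d A Es u i = 1 / \<beta> i * T $$ (i, i-1) * \<beta> (i-1)" if "1 \<le> i" "i \<le> d" for i
    unfolding lc_def SM B0_def using dg_sandwich_index[OF Tc, of i "i-1"] that by simp
  have "(\<Prod>i\<in>{1..d}. lc d A Es u i) = (\<Prod>i\<in>{1..d}. 1 / \<beta> i * T $$ (i, i-1) * \<beta> (i-1))"
    by (rule prod.cong) (use lci in auto)
  also have "\<dots> = \<tau> * (\<beta> 0 / \<beta> d)" unfolding \<tau>_def by (rule telescope) (use bnz in auto)
  finally have prodlc: "(\<Prod>i\<in>{1..d}. lc d A Es u i) = \<tau> * (\<beta> 0 / \<beta> d)" .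
  have H00: "H $$ (0,0) \<noteq> 0" and Hd0: "H $$ (d,0) \<noteq> 0" using Hk0 by auto
  have G00: "G $$ (0,0) = \<tau> / (\<pi> * H $$ (d,0))" using eqA pinz Hd0 by (simp add: field_simps)
  have "lnu (E 0) (Es 0) * (\<Prod>i\<in>{1..d}. lc d A Es u i)
     = 1 / (G $$ (0,0) * H $$ (0,0)) * (\<tau> * (H $$ (0,0) * \<alpha> / (H $$ (d,0) * \<alpha>)))"
    unfolding lnu_def tr prodlc using beta[of 0] beta[of d] by simp
  also have "\<dots> = \<pi>" unfolding G00 using pinz taunz H00 Hd0 anz by (simp add: field_simps)
  finally show ?thesis unfolding \<pi>_def ..
qed

end
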